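(* Let $\mathbf{A}\in\mathbb{R}^{M\times N}$, $\mathbf{Y}\in\mathbb{R}^{M\times L}$, and let $(\mathbf{g}(t),\mathbf{V}(t))$, $t\ge0$, evolve under the continuous gradient flow of $\mathcal{L}(\mathbf{g},\mathbf{V})=\Vert\mathbf{Y}-\mathbf{A}((\mathbf{g}^{\odot 2}\mathbf{1}_L)\odot\mathbf{V})\Vert_F^2$. Let $\mathbf{X}(t)=(\mathbf{g}(t)^{\odot 2}\mathbf{1}_L)\odot\mathbf{V}(t)$ and $\boldsymbol{\Lambda}(t)=\mathbf{A}^\top(\mathbf{Y}-\mathbf{A}\mathbf{X}(t))$. Then for every row $l\in[N]$ and every $t\ge0$, $$\frac12\frac{d}{dt}g_l^2(t)=\sum_{j\in[L]}\frac{d}{dt}V_{lj}^2(t)=4\sum_{j\in[L]}(\boldsymbol{\Lambda}(t)\odot\mathbf{X}(t))_{lj}=4\left(\boldsymbol{\Lambda}(t)\mathbf{X}(t)^\top\right)_{ll}.$$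
   Context: $\odot$ is the entrywise product and $\mathbf{1}_L$ the $1\times L$ all-ones row vector, so $X_{ij}=g_i^2V_{ij}$. Gradient flow: $\frac{d}{dt}g_l=-\partial\mathcal{L}/\partial g_l$, $\frac{d}{dt}V_{lm}=-\partial\mathcal{L}/\partial V_{lm}$ along the curve. *)

theory Defs
  imports "HOL-Analysis.Analysis"
begin

text \<open>Matrices are rendered as HOL-Analysis matrices: an M x N matrix is
  real^'n^'m. The vector g is real^'n, V is real^'l^'n.\<close>

definition Xmat :: "real^'n \<Rightarrow> real^'l^'n \<Rightarrow> real^'l^'n" where
  "Xmat g V = (\<chi> i j. (g$i)^2 * (V$i$j))"

text \<open>Loss: squared Frobenius norm (the Euclidean norm of the nested vector).\<close>
definition loss :: "real^'n^'m \<Rightarrow> real^'l^'m \<Rightarrow> real^'n \<Rightarrow> real^'l^'n \<Rightarrow> real" where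
  "loss A Y g V = (norm (Y - A ** Xmat g V))^2"

definition Lam :: "real^'n^'m \<Rightarrow> real^'l^'m \<Rightarrow> real^'n \<Rightarrow> real^'l^'n \<Rightarrow> real^'l^'n" where
  "Lam A Y g V = transpose A ** (Y - A ** Xmat g V)"

definition dL_dg :: "real^'n^'m \<Rightarrow> real^'l^'m \<Rightarrow> real^'n \<Rightarrow> real^'l^'n \<Rightarrow> 'n \<Rightarrow> real" where
  "dL_dg A Y g V l = deriv (\<lambda>s. loss A Y (\<chi> i. if i = l then s else g$i) V) (g$l)"

definition dL_dV :: "real^'n^'m \<Rightarrow> real^'l^'m \<Rightarrow> real^'n \<Rightarrow> real^'l^'n \<Rightarrow> 'n \<Rightarrow> 'l \<Rightarrow> real" where
  "dL_dV A Y g V l m = deriv (\<lambda>s. loss A Y g (\<chi> i j. if i = l \<and> j = m then s else V$i$j)) (V$l$m)"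

end

theory Submission
  imports Defs
begin

lemma norm2_mat: "(norm (x::real^'a^'b))^2 = (\<Sum>i\<in>UNIV. \<Sum>j\<in>UNIV. (x$i$j)^2)"
  unfolding power2_norm_eq_inner by (simp add: inner_vec_def power2_eq_square)

lemma loss_expand: "loss A Y g V = (\<Sum>i\<in>UNIV. \<Sum>j\<in>UNIV. (Y$i$j - (\<Sum>k\<in>UNIV. A$i$k * ((g$k)^2 * V$k$j)))^2)"
  unfolding loss_def norm2_mat by (simp add: matrix_matrix_mult_def Xmat_def)

lemma sif: "(\<Sum>k\<in>S. if P then f k else 0) = (if P then (\<Sum>k\<in>S. f k) else (0::real))" by simp

lemma sqdiff: "(f has_real_derivative f') (at s) \<Longrightarrow>
   ((\<lambda>s. (y - f s)^2) has_real_derivative 2 * (y - f s) * (- f')) (at s)"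
  by (auto intro!: derivative_eq_intros)

lemma dg_val: "dL_dg A Y g V l = - 4 * g$l * (\<Sum>j\<in>UNIV. Lam A Y g V $ l $ j * V$l$j)"
proof -
  define R where "R i j = Y$i$j - (\<Sum>k\<in>UNIV. A$i$k * ((g$k)^2 * V$k$j))" for i j
  have k: "((\<lambda>s. A$i$k * ((if k = l then s else g$k)^2 * V$k$j)) has_real_derivative
      (if k = l then A$i$l * (2 * s * V$l$j) else 0)) (at s)" for i j k s
    by (cases "k=l") (auto intro!: derivative_eq_intros)
  have D: "((\<lambda>s. loss A Y (\<chi> i. if i = l then s else g$i) V) has_real_derivative
     (\<Sum>i\<in>UNIV. \<Sum>j\<in>UNIV. 2 * (Y$i$j - (\<Sum>k\<in>UNIV. A$i$k * (((if k = l then s else g$k))^2 * V$k$j))) *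
        (- (\<Sum>k\<in>UNIV. (if k = l then A$i$l * (2 * s * V$l$j) else 0))))) (at s)" for s
    unfolding loss_expand vec_lambda_beta
    by (intro DERIV_sum sqdiff k)
  have e: "(if k = l then g$l else g$k) = g$k" for k by auto
  have "dL_dg A Y g V l = (\<Sum>i\<in>UNIV. \<Sum>j\<in>UNIV. 2 * R i j * (- (A$i$l * (2 * g$l * V$l$j))))"
    unfolding dL_dg_def R_def
    apply (rule DERIV_imp_deriv)
    using D[of "g$l"] by (simp add: e)
  also have "\<dots> = - 4 * g$l * (\<Sum>j\<in>UNIV. (\<Sum>i\<in>UNIV. A$i$l * R i j) * V$l$j)"
    by (subst sum.swap) (simp add: sum_distrib_left sum_distrib_right algebra_simps sum_negf)
  also have "\<dots> = - 4 * g$l * (\<Sum>j\<in>UNIV. Lam A Y g V $ l $ j * V$l$j)"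
    by (simp add: Lam_def R_def matrix_matrix_mult_def transpose_def Xmat_def)
  finally show ?thesis .
qed

lemma dV_val: "dL_dV A Y g V l m = - 2 * (g$l)^2 * Lam A Y g V $ l $ m"
proof -
  define R where "R i j = Y$i$j - (\<Sum>k\<in>UNIV. A$i$k * ((g$k)^2 * V$k$j))" for i j
  have k: "((\<lambda>s. A$i$k * ((g$k)^2 * (if k = l \<and> j = m then s else V$k$j))) has_real_derivative
      (if j = m then (if k = l then A$i$l*(g$l)^2 else 0) else 0)) (at s)" for i j k s
    by (cases "k = l \<and> j = m") (auto intro!: derivative_eq_intros)
  have D: "((\<lambda>s. loss A Y g (\<chi> i j. if i = l \<and> j = m then s else V$i$j)) has_real_derivative
     (\<Sum>i\<in>UNIV. \<Sum>j\<in>UNIV. 2 * (Y$i$j - (\<Sum>k\<in>UNIV. A$i$k * ((g$k)^2 * (if k = l \<and> j = m then s else V$k$j)))) *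
        (- (\<Sum>k\<in>UNIV. (if j = m then (if k = l then A$i$l*(g$l)^2 else 0) else 0))))) (at s)" for s
    unfolding loss_expand vec_lambda_beta
    by (intro DERIV_sum sqdiff k)
  have e: "(if k = l \<and> j = m then V$l$m else V$k$j) = V$k$j" for k j by auto
  have S: "(\<Sum>k\<in>UNIV. if j = m then (if k = l then c else 0) else 0) = (if j = m then c else (0::real))" for j c by simp
  have T: "(x::real) * (if P then c else 0) = (if P then x*c else 0)" for x P c by simp
  have U: "- (if P then c else 0) = (if P then -c else (0::real))" for P c by simp
  have "dL_dV A Y g V l m = (\<Sum>i\<in>UNIV. 2 * R i m * (- (A$i$l * (g$l)^2)))"
    unfolding dL_dV_def R_def
    apply (rule DERIV_imp_deriv)
    using D[of "V$l$m"] by (simp add: e S T U)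
  also have "\<dots> = - 2 * (g$l)^2 * (\<Sum>i\<in>UNIV. A$i$l * R i m)"
    by (simp add: sum_distrib_left algebra_simps sum_negf)
  also have "\<dots> = - 2 * (g$l)^2 * Lam A Y g V $ l $ m"
    by (simp add: Lam_def R_def matrix_matrix_mult_def transpose_def Xmat_def)
  finally show ?thesis .
qed

theorem lemmaB2:
  fixes A :: "real^'n^'m" and Y :: "real^'l^'m"
    and g :: "real \<Rightarrow> real^'n" and V :: "real \<Rightarrow> real^'l^'n"
  assumes flow_g: "\<And>t l. t \<ge> 0 \<Longrightarrow>
      ((\<lambda>s. g s $ l) has_real_derivative (- dL_dg A Y (g t) (V t) l)) (at t within {0..})"
    and flow_V: "\<And>t l m. t \<ge> 0 \<Longrightarrow>
      ((\<lambda>s. V s $ l $ m) has_real_derivative (- dL_dV A Y (g t) (V t) l m)) (at t within {0..})"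
  shows "\<forall>l. \<forall>t\<ge>0. \<exists>Dg DV.
      ((\<lambda>s. (g s $ l)^2) has_real_derivative Dg) (at t within {0..}) \<and>
      (\<forall>j. ((\<lambda>s. (V s $ l $ j)^2) has_real_derivative DV j) (at t within {0..})) \<and>
      Dg / 2 = (\<Sum>j\<in>UNIV. DV j) \<and>
      (\<Sum>j\<in>UNIV. DV j) = 4 * (\<Sum>j\<in>UNIV. (Lam A Y (g t) (V t)) $ l $ j * (Xmat (g t) (V t)) $ l $ j) \<and>
      4 * (\<Sum>j\<in>UNIV. (Lam A Y (g t) (V t)) $ l $ j * (Xmat (g t) (V t)) $ l $ j)
        = 4 * ((Lam A Y (g t) (V t)) ** transpose (Xmat (g t) (V t))) $ l $ l"
proof (intro allI impI)
  fix l and t :: real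
  assume t: "t \<ge> 0"
  let ?L = "Lam A Y (g t) (V t)" and ?X = "Xmat (g t) (V t)"
  define Dg where "Dg = 2 * (g t $ l) * (- dL_dg A Y (g t) (V t) l)"
  define DV where "DV j = 2 * (V t $ l $ j) * (- dL_dV A Y (g t) (V t) l j)" for j
  have hg: "((\<lambda>s. (g s $ l)^2) has_real_derivative Dg) (at t within {0..})"
    unfolding Dg_def using flow_g[OF t, of l]
    by (auto intro!: derivative_eq_intros)
  have hV: "((\<lambda>s. (V s $ l $ j)^2) has_real_derivative DV j) (at t within {0..})" for j
    unfolding DV_def using flow_V[OF t, of l j]
    by (auto intro!: derivative_eq_intros)
  have X: "?X $ l $ j = (g t $ l)^2 * V t $ l $ j" for j by (simp add: Xmat_def)
  have e1: "Dg / 2 = 4 * (\<Sum>j\<in>UNIV. ?L $ l $ j * ?X $ l $ j)"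
  proof -
    have "(\<Sum>j\<in>UNIV. ?L $ l $ j * ((g t $ l)^2 * V t $ l $ j)) = (g t $ l)^2 * (\<Sum>j\<in>UNIV. ?L $ l $ j * V t $ l $ j)"
      by (simp add: sum_distrib_left algebra_simps)
    moreover have "Dg / 2 = 4 * ((g t $ l)^2 * (\<Sum>j\<in>UNIV. ?L $ l $ j * V t $ l $ j))"
      unfolding Dg_def dg_val by (simp add: power2_eq_square)
    ultimately show ?thesis unfolding X by simp
  qed
  have e2: "(\<Sum>j\<in>UNIV. DV j) = 4 * (\<Sum>j\<in>UNIV. ?L $ l $ j * ?X $ l $ j)"
    unfolding DV_def dV_val X
    by (simp add: sum_distrib_left power2_eq_square algebra_simps)
  have e3: "(\<Sum>j\<in>UNIV. ?L $ l $ j * ?X $ l $ j) = (?L ** transpose ?X) $ l $ l"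
    by (simp add: matrix_matrix_mult_def transpose_def)
  show "\<exists>Dg DV.
      ((\<lambda>s. (g s $ l)^2) has_real_derivative Dg) (at t within {0..}) \<and>
      (\<forall>j. ((\<lambda>s. (V s $ l $ j)^2) has_real_derivative DV j) (at t within {0..})) \<and>
      Dg / 2 = (\<Sum>j\<in>UNIV. DV j) \<and>
      (\<Sum>j\<in>UNIV. DV j) = 4 * (\<Sum>j\<in>UNIV. ?L $ l $ j * ?X $ l $ j) \<and>
      4 * (\<Sum>j\<in>UNIV. ?L $ l $ j * ?X $ l $ j) = 4 * (?L ** transpose ?X) $ l $ l"
    apply (intro exI[of _ Dg] exI[of _ DV] conjI allI hg hV)
    using e1 e2 e3 by simp_all
qed

end
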